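(* Let $\mathcal{P}$ be a minimum path cover of a tree $T$ and let $e=xy$ be a connector edge of $\mathcal{P}$. Then at least one of $x,y$ is an interior connector vertex.
   Context: A path cover of a tree $T$ is a set of vertex-disjoint paths of $T$ (a single vertex counts as a path) that together cover all vertices of $T$; it is minimum if no path cover has fewer paths. For a path cover $\mathcal{P}$, an edge $xy$ of $T$ with $x,y$ in different paths of $\mathcal{P}$ is a connector edge, and $x,y$ are connector vertices; a connector vertex is interior if it is an interior (non-end) vertex of the path of $\mathcal{P}$ containing it. *)

theory Defs
  imports Main
begin

definition graph :: "'a set \<Rightarrow> 'a set set \<Rightarrow> bool" where
  "graph V E \<longleftrightarrow> finite V \<and> (\<forall>e\<in>E. \<exists>u v. e = {u, v} \<and> u \<noteq> v \<and> u \<in> V \<and> v \<in> V)"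

definition is_path :: "'a set \<Rightarrow> 'a set set \<Rightarrow> 'a list \<Rightarrow> bool" where
  "is_path V E xs \<longleftrightarrow> xs \<noteq> [] \<and> distinct xs \<and> set xs \<subseteq> V \<and>
     (\<forall>i. Suc i < length xs \<longrightarrow> {xs ! i, xs ! Suc i} \<in> E)"

definition connected :: "'a set \<Rightarrow> 'a set set \<Rightarrow> bool" where
  "connected V E \<longleftrightarrow> (\<forall>u\<in>V. \<forall>v\<in>V. \<exists>xs. is_path V E xs \<and> hd xs = u \<and> last xs = v)"

definition is_cycle :: "'a set \<Rightarrow> 'a set set \<Rightarrow> 'a list \<Rightarrow> bool" where
  "is_cycle V E xs \<longleftrightarrow> is_path V E xs \<and> length xs \<ge> 3 \<and> {last xs, hd xs} \<in> E"

definition tree :: "'a set \<Rightarrow> 'a set set \<Rightarrow> bool" where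
  "tree V E \<longleftrightarrow> graph V E \<and> V \<noteq> {} \<and> connected V E \<and> (\<nexists>xs. is_cycle V E xs)"

definition path_cover :: "'a set \<Rightarrow> 'a set set \<Rightarrow> 'a list set \<Rightarrow> bool" where
  "path_cover V E P \<longleftrightarrow> (\<forall>p\<in>P. is_path V E p) \<and>
     (\<forall>p\<in>P. \<forall>q\<in>P. p \<noteq> q \<longrightarrow> set p \<inter> set q = {}) \<and>
     (\<Union>p\<in>P. set p) = V"

definition min_path_cover :: "'a set \<Rightarrow> 'a set set \<Rightarrow> 'a list set \<Rightarrow> bool" where
  "min_path_cover V E P \<longleftrightarrow> path_cover V E P \<and> finite P \<and>
     (\<forall>Q. path_cover V E Q \<and> finite Q \<longrightarrow> card P \<le> card Q)"

definition connector_edge :: "'a set set \<Rightarrow> 'a list set \<Rightarrow> 'a \<Rightarrow> 'a \<Rightarrow> bool" where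
  "connector_edge E P x y \<longleftrightarrow> {x, y} \<in> E \<and>
     (\<exists>p\<in>P. \<exists>q\<in>P. p \<noteq> q \<and> x \<in> set p \<and> y \<in> set q)"

definition connector_vertex :: "'a set set \<Rightarrow> 'a list set \<Rightarrow> 'a \<Rightarrow> bool" where
  "connector_vertex E P x \<longleftrightarrow> (\<exists>y. connector_edge E P x y \<or> connector_edge E P y x)"

definition interior_connector :: "'a set set \<Rightarrow> 'a list set \<Rightarrow> 'a \<Rightarrow> bool" where
  "interior_connector E P x \<longleftrightarrow> connector_vertex E P x \<and>
     (\<exists>p\<in>P. x \<in> set p \<and> x \<noteq> hd p \<and> x \<noteq> last p)"

end

theory Submission
  imports Defs
begin

lemma is_path_rev:
  assumes "is_path V E xs" shows "is_path V E (rev xs)"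
  unfolding is_path_def
proof (intro conjI allI impI)
  show "rev xs \<noteq> []" "distinct (rev xs)" "set (rev xs) \<subseteq> V"
    using assms by (auto simp: is_path_def)
  fix i assume i: "Suc i < length (rev xs)"
  let ?j = "length xs - Suc (Suc i)"
  have "{xs ! ?j, xs ! Suc ?j} \<in> E" using assms i by (auto simp: is_path_def)
  moreover have "rev xs ! i = xs ! Suc ?j" "rev xs ! Suc i = xs ! ?j"
    using i by (auto simp: rev_nth Suc_diff_Suc)
  ultimately show "{rev xs ! i, rev xs ! Suc i} \<in> E" by (simp add: insert_commute)
qed

lemma is_path_append:
  assumes a: "is_path V E a" and b: "is_path V E b" and d: "set a \<inter> set b = {}"
    and e: "{last a, hd b} \<in> E"
  shows "is_path V E (a @ b)"
  unfolding is_path_def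
proof (intro conjI allI impI)
  show "a @ b \<noteq> []" "distinct (a @ b)" "set (a @ b) \<subseteq> V"
    using a b d by (auto simp: is_path_def)
  fix i assume i: "Suc i < length (a @ b)"
  consider "Suc i < length a" | "Suc i = length a" | "length a \<le> i" by linarith
  then show "{(a @ b) ! i, (a @ b) ! Suc i} \<in> E"
  proof cases
    case 1 then show ?thesis using a by (auto simp: is_path_def nth_append)
  next
    case 2
    have "a ! i = last a" using 2 a by (simp add: last_conv_nth is_path_def del: Suc_eq_plus1 flip: 2)
    moreover have "b ! 0 = hd b" using b by (simp add: hd_conv_nth is_path_def)
    ultimately show ?thesis using 2 e by (simp add: nth_append)
  next
    case 3
    have "Suc (i - length a) < length b" using i 3 by simp
    then have "{b ! (i - length a), b ! Suc (i - length a)} \<in> E" using b by (auto simp: is_path_def)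
    moreover have "Suc i - length a = Suc (i - length a)" using 3 by simp
    ultimately show ?thesis using 3 by (simp add: nth_append)
  qed
qed

theorem lemma3p5:
  fixes V :: "'a set" and E :: "'a set set" and P :: "'a list set" and x y :: 'a
  assumes "tree V E"
    and "min_path_cover V E P"
    and "connector_edge E P x y"
  shows "interior_connector E P x \<or> interior_connector E P y"
proof (rule ccontr)
  assume na: "\<not> (interior_connector E P x \<or> interior_connector E P y)"
  have cx: "connector_vertex E P x" using assms(3) unfolding connector_vertex_def by blast
  have cy: "connector_vertex E P y" using assms(3) unfolding connector_vertex_def by blast
  obtain p q where pq: "p \<in> P" "q \<in> P" "p \<noteq> q" "x \<in> set p" "y \<in> set q" and exy: "{x,y} \<in> E"
    using assms(3) unfolding connector_edge_def by blast
  have pc: "path_cover V E P" and fP: "finite P"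
    and mn: "\<And>Q. path_cover V E Q \<Longrightarrow> finite Q \<Longrightarrow> card P \<le> card Q"
    using assms(2) unfolding min_path_cover_def by auto
  have pp: "is_path V E p" "is_path V E q" using pc pq unfolding path_cover_def by auto
  have dpq: "set p \<inter> set q = {}" using pc pq unfolding path_cover_def by auto
  have xe: "x = hd p \<or> x = last p" using na cx pq unfolding interior_connector_def by blast
  have ye: "y = hd q \<or> y = last q" using na cy pq unfolding interior_connector_def by blast
  obtain p' where p': "is_path V E p'" "set p' = set p" "last p' = x"
  proof (cases "x = last p")
    case True then show ?thesis using that pp by auto
  next
    case False
    then have "x = hd p" using xe by auto
    moreover have "p \<noteq> []" using pp by (simp add: is_path_def)
    ultimately show ?thesis using that[of "rev p"] is_path_rev[OF pp(1)] by (simp add: last_rev)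
  qed
  obtain q' where q': "is_path V E q'" "set q' = set q" "hd q' = y"
  proof (cases "y = hd q")
    case True then show ?thesis using that pp by auto
  next
    case False
    then have "y = last q" using ye by auto
    moreover have "q \<noteq> []" using pp by (simp add: is_path_def)
    ultimately show ?thesis using that[of "rev q"] is_path_rev[OF pp(2)] by (simp add: hd_rev)
  qed
  define r where "r = p' @ q'"
  have rp: "is_path V E r" unfolding r_def
    using is_path_append[OF p'(1) q'(1)] p' q' dpq exy by simp
  have sr: "set r = set p \<union> set q" unfolding r_def using p' q' by simp
  define Q where "Q = insert r (P - {p, q})"
  have rnot: "r \<notin> P - {p, q}"
  proof
    assume "r \<in> P - {p, q}"
    then have "set r \<inter> set p = {}" using pc pq unfolding path_cover_def by auto
    then show False using sr pq by auto
  qed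
  have "path_cover V E Q"
    unfolding path_cover_def
  proof (intro conjI ballI impI)
    fix s assume "s \<in> Q" then show "is_path V E s"
      using rp pc unfolding Q_def path_cover_def by auto
  next
    fix s t assume st: "s \<in> Q" "t \<in> Q" "s \<noteq> t"
    have D: "\<And>u w. u \<in> P \<Longrightarrow> w \<in> P \<Longrightarrow> u \<noteq> w \<Longrightarrow> set u \<inter> set w = {}"
      using pc unfolding path_cover_def by auto
    show "set s \<inter> set t = {}"
      using st D[of s t] D[of s p] D[of s q] D[of t p] D[of t q] pq sr
      unfolding Q_def by auto
  next
    have "(\<Union>p\<in>P. set p) = V" using pc unfolding path_cover_def by auto
    then show "(\<Union>p\<in>Q. set p) = V" unfolding Q_def using sr pq by blast
  qed
  moreover have "finite Q" using fP unfolding Q_def by simp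
  moreover have "card Q < card P"
  proof -
    have "card (P - {p, q}) = card P - 2" using fP pq by (simp add: card_Diff_subset)
    moreover have "card P \<ge> 2"
    proof -
      have "card {p, q} \<le> card P" using fP pq by (intro card_mono) auto
      then show ?thesis using pq by simp
    qed
    ultimately show ?thesis unfolding Q_def using rnot fP by simp
  qed
  ultimately show False using mn by fastforce
qed

end
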